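(* Let $\phi\colon P(\mathbb{R})\to P(\mathbb{R})$ be a surjective isometry with respect to the Kuiper distance. Then there exists a bijection $f\colon\mathbb{R}\to\mathbb{R}$ such that $$\phi(\mu)(\{f(x)\})=\mu(\{x\})\qquad(\mu\in P(\mathbb{R}),\ x\in\mathbb{R}).$$
   Context: $P(\mathbb{R})$ is the set of Borel probability measures on $\mathbb{R}$, with the Kuiper distance $d_{Ku}(\mu,\nu)=\sup\{|\mu(I)-\nu(I)| : I\text{ a non-degenerate interval of }\mathbb{R}\}$. *)

theory Defs
  imports "HOL-Probability.Probability"
begin

definition prob_measures_real :: "real measure set" where
  "prob_measures_real = {M. prob_space M \<and> sets M = sets borel}"

definition nondeg_intervals :: "real set set" where
  "nondeg_intervals = {I. is_interval I \<and> (\<exists>a\<in>I. \<exists>b\<in>I. a < b)}"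

definition kuiper_dist :: "real measure \<Rightarrow> real measure \<Rightarrow> real" where
  "kuiper_dist \<mu> \<nu> = (SUP I \<in> nondeg_intervals. \<bar>measure \<mu> I - measure \<nu> I\<bar>)"

end

theory Submission
  imports Defs
begin


abbreviation P where "P \<equiv> prob_measures_real"

lemma P_prob: "M \<in> P \<Longrightarrow> prob_space M"
  by (simp add: prob_measures_real_def)
lemma P_sets: "M \<in> P \<Longrightarrow> sets M = sets borel"
  by (simp add: prob_measures_real_def)

lemma nd01: "{0::real..1} \<in> nondeg_intervals"
  unfolding nondeg_intervals_def mem_Collect_eq
proof (intro conjI is_interval_cc)
  show "\<exists>a\<in>{0::real..1}. \<exists>b\<in>{0..1}. a < b" by (rule bexI[of _ 0], rule bexI[of _ 1]) auto
qed
lemma nondeg_ne: "nondeg_intervals \<noteq> {}"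
  using nd01 by auto

lemma nondeg_borel: "I \<in> nondeg_intervals \<Longrightarrow> I \<in> sets borel"
  unfolding nondeg_intervals_def by (auto intro: real_interval_borel_measurable)

lemma meas_01: "M \<in> P \<Longrightarrow> 0 \<le> measure M A \<and> measure M A \<le> 1"
  using prob_space.prob_le_1[OF P_prob] by auto

lemma kd_bdd: assumes "M \<in> P" "N \<in> P"
  shows "bdd_above ((\<lambda>I. \<bar>measure M I - measure N I\<bar>) ` nondeg_intervals)"
proof (rule bdd_aboveI[of _ 1], clarify)
  fix I
  show "\<bar>measure M I - measure N I\<bar> \<le> 1" 
  proof -
    have "measure M I \<le> 1" "measure N I \<le> 1" "0 \<le> measure M I" "0 \<le> measure N I"
      using meas_01[OF assms(1), of I] meas_01[OF assms(2), of I] by auto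
    then show ?thesis by linarith
  qed
qed

lemma kd_upper: "M \<in> P \<Longrightarrow> N \<in> P \<Longrightarrow> I \<in> nondeg_intervals \<Longrightarrow> \<bar>measure M I - measure N I\<bar> \<le> kuiper_dist M N"
  unfolding kuiper_dist_def by (rule cSUP_upper[OF _ kd_bdd])

lemma kd_least: "(\<And>I. I \<in> nondeg_intervals \<Longrightarrow> \<bar>measure M I - measure N I\<bar> \<le> c) \<Longrightarrow> kuiper_dist M N \<le> c"
  unfolding kuiper_dist_def by (rule cSUP_least[OF nondeg_ne])

lemma kd_sym: "kuiper_dist M N = kuiper_dist N M"
  unfolding kuiper_dist_def by (simp add: abs_minus_commute)

lemma kd_nonneg: "M \<in> P \<Longrightarrow> N \<in> P \<Longrightarrow> 0 \<le> kuiper_dist M N"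
  using kd_upper[of M N "{0..1}", OF _ _ nd01] by (simp add: order_trans[OF abs_ge_zero])

lemma ret_P: "return borel (x::real) \<in> P"
  by (simp add: prob_measures_real_def prob_space_return)

lemma kd_ret: assumes M: "M \<in> P"
  shows "kuiper_dist M (return borel x) = 1 - measure M {x}"
proof (rule antisym)
  interpret prob_space M using P_prob[OF M] .
  have sM: "sets M = sets borel" using P_sets[OF M] .
  show "kuiper_dist M (return borel x) \<le> 1 - measure M {x}"
  proof (rule kd_least)
    fix I assume I: "I \<in> nondeg_intervals"
    have Ib: "I \<in> events" using nondeg_borel[OF I] sM by simp
    have xb: "{x} \<in> events" using sM by simp
    show "\<bar>measure M I - measure (return borel x) I\<bar> \<le> 1 - measure M {x}"
    proof (cases "x \<in> I")
      case True
      have "measure M {x} \<le> measure M I" using True Ib by (intro finite_measure_mono) auto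
      then show ?thesis using True nondeg_borel[OF I] measure_return[of I borel x] prob_le_1[of I] by simp
    next
      case False
      have "measure M I \<le> measure M (UNIV - {x})" using False Ib xb
        by (intro finite_measure_mono) (simp_all add: sM, blast)
      also have "\<dots> = 1 - measure M {x}" 
      proof -
        have "space M = UNIV" using sets_eq_imp_space_eq[OF sM] by simp
        then show ?thesis using prob_compl[OF xb] by simp
      qed
      finally show ?thesis using False nondeg_borel[OF I] measure_return[of I borel x] by simp
    qed
  qed
next
  interpret prob_space M using P_prob[OF M] .
  have sM: "sets M = sets borel" using P_sets[OF M] .
  define A where "A n = {x..x + 1/(Suc n)}" for n :: nat
  have "(\<lambda>n. measure M (A n)) \<longlonglongrightarrow> measure M (\<Inter>n. A n)"
  proof (rule Lim_measure_decseq)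
    show "range A \<subseteq> sets M" unfolding A_def image_subset_iff sM by simp
    show "decseq A" unfolding A_def decseq_def
    proof (intro allI impI subsetI)
      fix m n :: nat and y assume "m \<le> n" "y \<in> {x..x + 1 / real (Suc n)}"
      moreover have "1 / real (Suc n) \<le> 1 / real (Suc m)" using \<open>m \<le> n\<close> by (simp add: frac_le)
      ultimately show "y \<in> {x..x + 1 / real (Suc m)}" by auto
    qed
    show "\<And>i. emeasure M (A i) \<noteq> \<infinity>" by simp
  qed
  moreover have "(\<Inter>n. A n) = {x}"
  proof safe
    fix y assume "y \<in> (\<Inter>n. A n)"
    then have h: "x \<le> y \<and> y \<le> x + 1/Suc n" for n by (auto simp: A_def)
    show "y = x"
    proof (rule ccontr)
      assume "y \<noteq> x"
      then have "y - x > 0" using h[of 0] by auto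
      then obtain n where "1 / real (Suc n) < y - x" using nat_approx_posE by blast
      then show False using h[of n] by auto
    qed
  next
    fix n show "x \<in> A n" by (simp add: A_def)
  qed
  ultimately have lim: "(\<lambda>n. 1 - measure M (A n)) \<longlonglongrightarrow> 1 - measure M {x}"
    by (intro tendsto_diff tendsto_const) simp
  show "1 - measure M {x} \<le> kuiper_dist M (return borel x)"
  proof (rule LIMSEQ_le_const2[OF lim], rule exI[of _ 0], clarify)
    fix n
    have In: "A n \<in> nondeg_intervals" unfolding nondeg_intervals_def A_def mem_Collect_eq
    proof (intro conjI is_interval_cc)
      show "\<exists>a\<in>{x..x + 1 / real (Suc n)}. \<exists>b\<in>{x..x + 1 / real (Suc n)}. a < b"
        by (rule bexI[of _ x], rule bexI[of _ "x + 1/Suc n"]) auto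
    qed
    have "\<bar>measure M (A n) - measure (return borel x) (A n)\<bar> = 1 - measure M (A n)"
      using measure_return[of "A n" borel x] prob_le_1[of "A n"] by (simp add: A_def)
    then show "1 - measure M (A n) \<le> kuiper_dist M (return borel x)"
      using kd_upper[OF M ret_P[of x] In] by simp
  qed
qed


lemma spaceP: "M \<in> P \<Longrightarrow> space M = UNIV"
  using sets_eq_imp_space_eq[OF P_sets] by simp

lemma complP: "M \<in> P \<Longrightarrow> A \<in> sets borel \<Longrightarrow> measure M (UNIV - A) = 1 - measure M A"
  using prob_space.prob_compl[OF P_prob, of M A] spaceP[of M] P_sets[of M] by simp

lemma dens:
  assumes M: "M \<in> P" and A: "A \<in> sets borel" and ab: "0 \<le> a" "0 \<le> b"
    and tot: "a * measure M A + b * (1 - measure M A) = 1"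
  shows "density M (\<lambda>x. ennreal (if x \<in> A then a else b)) \<in> P"
    and "\<And>I. I \<in> sets borel \<Longrightarrow> measure (density M (\<lambda>x. ennreal (if x \<in> A then a else b))) I
            = a * measure M (I \<inter> A) + b * measure M (I - A)"
proof -
  define g where "g = (\<lambda>x. ennreal (if x \<in> A then a else b))"
  interpret prob_space M using P_prob[OF M] .
  have sM: "sets M = sets borel" using P_sets[OF M] .
  have gb: "g \<in> borel_measurable borel" unfolding g_def using A by measurable
  have eqm: "(M \<rightarrow>\<^sub>M (borel::ennreal measure)) = (borel \<rightarrow>\<^sub>M borel)" by (rule measurable_cong_sets[OF sM refl])
  have gm: "g \<in> borel_measurable M" unfolding eqm by (rule gb)
  have em: "emeasure (density M g) I = ennreal (a * measure M (I \<inter> A) + b * measure M (I - A))"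
    if I: "I \<in> sets borel" for I
  proof -
    have I': "I \<in> sets M" "I \<inter> A \<in> sets M" "I - A \<in> sets M" using I A sM by auto
    have "emeasure (density M g) I = (\<integral>\<^sup>+ x. g x * indicator I x \<partial>M)"
      by (rule emeasure_density[OF gm I'(1)])
    also have "\<dots> = (\<integral>\<^sup>+ x. ennreal a * indicator (I \<inter> A) x + ennreal b * indicator (I - A) x \<partial>M)"
      by (rule nn_integral_cong) (simp add: g_def indicator_def)
    also have "\<dots> = (\<integral>\<^sup>+ x. ennreal a * indicator (I \<inter> A) x \<partial>M) + (\<integral>\<^sup>+ x. ennreal b * indicator (I - A) x \<partial>M)"
      by (rule nn_integral_add) (use I' in auto)
    also have "\<dots> = ennreal a * emeasure M (I \<inter> A) + ennreal b * emeasure M (I - A)"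
      using I' by (simp add: nn_integral_cmult_indicator)
    also have "\<dots> = ennreal (a * measure M (I \<inter> A) + b * measure M (I - A))"
      using ab by (simp add: emeasure_eq_measure ennreal_mult ennreal_plus[symmetric])
    finally show ?thesis .
  qed
  have mm: "measure (density M g) I = a * measure M (I \<inter> A) + b * measure M (I - A)"
    if I: "I \<in> sets borel" for I
    unfolding measure_def[of "density M g"] em[OF I] by (rule enn2real_ennreal) (use ab in simp)
  show "\<And>I. I \<in> sets borel \<Longrightarrow> measure (density M (\<lambda>x. ennreal (if x \<in> A then a else b))) I
            = a * measure M (I \<inter> A) + b * measure M (I - A)"
    using mm unfolding g_def .
  have "prob_space (density M g)"
  proof (rule prob_spaceI)
    have "space (density M g) = UNIV" using spaceP[OF M] by simp
    then show "emeasure (density M g) (space (density M g)) = 1"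
      using em[of UNIV] complP[OF M A] tot by (simp add: Diff_eq)
  qed
  then show "density M (\<lambda>x. ennreal (if x \<in> A then a else b)) \<in> P"
    unfolding g_def prob_measures_real_def using sM by simp
qed



definition Q :: "real measure \<Rightarrow> bool" where
  "Q \<mu> \<longleftrightarrow> (\<forall>\<nu>1\<in>P. \<forall>\<nu>2\<in>P. 2 * kuiper_dist \<nu>1 \<mu> = kuiper_dist \<nu>1 \<nu>2 \<and>
      2 * kuiper_dist \<mu> \<nu>2 = kuiper_dist \<nu>1 \<nu>2 \<longrightarrow> kuiper_dist \<nu>1 \<nu>2 = 0)"

lemma split_pt: assumes N: "N \<in> P" and I: "I \<in> sets borel"
  shows "\<exists>r. 0 \<le> r \<and> r \<le> 1 - measure N {x} \<and> measure N I = (if x \<in> I then measure N {x} else 0) + r"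
proof -
  interpret prob_space N using P_prob[OF N] .
  have sN: "sets N = sets borel" using P_sets[OF N] .
  have e: "I \<inter> {x} \<in> events" "I - {x} \<in> events" using I sN by auto
  have "measure N I = measure N (I \<inter> {x}) + measure N (I - {x})"
  proof -
    have "I \<inter> {x} \<inter> (I - {x}) = {}" by auto
    from finite_measure_Union[OF e this] have "measure N (I \<inter> {x} \<union> (I - {x})) = measure N (I \<inter> {x}) + measure N (I - {x})" .
    moreover have "I \<inter> {x} \<union> (I - {x}) = I" by auto
    ultimately show ?thesis by simp
  qed
  moreover have "measure N (I \<inter> {x}) = (if x \<in> I then measure N {x} else 0)" by auto
  moreover have "measure N (I - {x}) \<le> measure N (UNIV - {x})"
    by (rule finite_measure_mono) (auto simp: sN)
  moreover have "measure N (UNIV - {x}) = 1 - measure N {x}" using complP[OF N, of "{x}"] by simp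
  ultimately show ?thesis by (intro exI[of _ "measure N (I - {x})"]) auto
qed

lemma Q_ret: "Q (return borel x)"
  unfolding Q_def
proof (intro ballI impI)
  fix N1 N2 assume N: "N1 \<in> P" "N2 \<in> P"
    and h: "2 * kuiper_dist N1 (return borel x) = kuiper_dist N1 N2 \<and>
      2 * kuiper_dist (return borel x) N2 = kuiper_dist N1 N2"
  define D where "D = kuiper_dist N1 N2"
  have a1: "1 - measure N1 {x} = D / 2" using h kd_ret[OF N(1)] unfolding D_def by simp
  have a2: "1 - measure N2 {x} = D / 2" using h kd_ret[OF N(2)] kd_sym[of "return borel x" N2] unfolding D_def by simp
  have "D \<le> D / 2" unfolding D_def
  proof (rule kd_least)
    fix I assume I: "I \<in> nondeg_intervals"
    obtain r1 where r1: "0 \<le> r1" "r1 \<le> 1 - measure N1 {x}" "measure N1 I = (if x \<in> I then measure N1 {x} else 0) + r1"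
      using split_pt[OF N(1) nondeg_borel[OF I]] by blast
    obtain r2 where r2: "0 \<le> r2" "r2 \<le> 1 - measure N2 {x}" "measure N2 I = (if x \<in> I then measure N2 {x} else 0) + r2"
      using split_pt[OF N(2) nondeg_borel[OF I]] by blast
    have "measure N1 {x} = measure N2 {x}" using a1 a2 by simp
    then have eq: "measure N1 I - measure N2 I = r1 - r2" using r1(3) r2(3) by (cases "x \<in> I") auto
    show "\<bar>measure N1 I - measure N2 I\<bar> \<le> kuiper_dist N1 N2 / 2"
      using r1(1,2) r2(1,2) a1 a2 eq unfolding D_def abs_le_iff by linarith
  qed
  moreover have "0 \<le> D" unfolding D_def by (rule kd_nonneg[OF N])
  ultimately show "kuiper_dist N1 N2 = 0" unfolding D_def by simp
qed



lemma split2: assumes N: "N \<in> P" and I: "I \<in> sets borel" and A: "A \<in> sets borel"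
  shows "measure N I = measure N (I \<inter> A) + measure N (I - A)"
proof -
  interpret prob_space N using P_prob[OF N] .
  have sN: "sets N = sets borel" using P_sets[OF N] .
  have e: "I \<inter> A \<in> events" "I - A \<in> events" using I A sN by auto
  have "I \<inter> A \<inter> (I - A) = {}" by auto
  from finite_measure_Union[OF e this] have "measure N (I \<inter> A \<union> (I - A)) = measure N (I \<inter> A) + measure N (I - A)" .
  moreover have "I \<inter> A \<union> (I - A) = I" by auto
  ultimately show ?thesis by simp
qed

lemma mid:
  assumes N: "N1 \<in> P" "M \<in> P" "N2 \<in> P"
    and h: "\<And>I. I \<in> nondeg_intervals \<Longrightarrow> measure N1 I - measure M I = measure M I - measure N2 I"
  shows "2 * kuiper_dist N1 M = kuiper_dist N1 N2" "2 * kuiper_dist M N2 = kuiper_dist N1 N2"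
proof -
  have "kuiper_dist N1 N2 \<le> 2 * kuiper_dist N1 M"
  proof (rule kd_least)
    fix I assume I: "I \<in> nondeg_intervals"
    have e: "measure N1 I - measure N2 I = 2 * (measure N1 I - measure M I)" unfolding right_diff_distrib using h[OF I] by linarith
    have "\<bar>measure N1 I - measure N2 I\<bar> = 2 * \<bar>measure N1 I - measure M I\<bar>" unfolding e abs_mult by simp
    then show "\<bar>measure N1 I - measure N2 I\<bar> \<le> 2 * kuiper_dist N1 M" using kd_upper[OF N(1,2) I] by simp
  qed
  moreover have "kuiper_dist N1 M \<le> kuiper_dist N1 N2 / 2"
  proof (rule kd_least)
    fix I assume I: "I \<in> nondeg_intervals"
    have e: "measure N1 I - measure N2 I = 2 * (measure N1 I - measure M I)" unfolding right_diff_distrib using h[OF I] by linarith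
    have "\<bar>measure N1 I - measure N2 I\<bar> = 2 * \<bar>measure N1 I - measure M I\<bar>" unfolding e abs_mult by simp
    then show "\<bar>measure N1 I - measure M I\<bar> \<le> kuiper_dist N1 N2 / 2" using kd_upper[OF N(1,3) I] by simp
  qed
  ultimately show "2 * kuiper_dist N1 M = kuiper_dist N1 N2" by simp
  have "kuiper_dist N1 N2 \<le> 2 * kuiper_dist M N2"
  proof (rule kd_least)
    fix I assume I: "I \<in> nondeg_intervals"
    have e: "measure N1 I - measure N2 I = 2 * (measure M I - measure N2 I)" unfolding right_diff_distrib using h[OF I] by linarith
    have "\<bar>measure N1 I - measure N2 I\<bar> = 2 * \<bar>measure M I - measure N2 I\<bar>" unfolding e abs_mult by simp
    then show "\<bar>measure N1 I - measure N2 I\<bar> \<le> 2 * kuiper_dist M N2" using kd_upper[OF N(2,3) I] by simp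
  qed
  moreover have "kuiper_dist M N2 \<le> kuiper_dist N1 N2 / 2"
  proof (rule kd_least)
    fix I assume I: "I \<in> nondeg_intervals"
    have e: "measure N1 I - measure N2 I = 2 * (measure M I - measure N2 I)" unfolding right_diff_distrib using h[OF I] by linarith
    have "\<bar>measure N1 I - measure N2 I\<bar> = 2 * \<bar>measure M I - measure N2 I\<bar>" unfolding e abs_mult by simp
    then show "\<bar>measure M I - measure N2 I\<bar> \<le> kuiper_dist N1 N2 / 2" using kd_upper[OF N(1,3) I] by simp
  qed
  ultimately show "2 * kuiper_dist M N2 = kuiper_dist N1 N2" by simp
qed

lemma Q_01: assumes M: "M \<in> P" and Q: "Q M"
  shows "measure M {..c} = 0 \<or> measure M {..c} = 1"
proof (rule ccontr)
  define t where "t = measure M {..c}"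
  define A where "A = {..c}"
  assume "\<not> ?thesis"
  then have t: "0 < t" "t < 1" using meas_01[OF M, of "{..c}"] measure_nonneg[of M "{..c}"] unfolding t_def by linarith+
  have Ab: "A \<in> sets borel" unfolding A_def by simp
  have tA: "measure M A = t" unfolding A_def t_def ..
  define N1 where "N1 = density M (\<lambda>x. ennreal (if x \<in> A then 2 - t else 1 - t))"
  define N2 where "N2 = density M (\<lambda>x. ennreal (if x \<in> A then t else 1 + t))"
  have tot1: "(2 - t) * measure M A + (1 - t) * (1 - measure M A) = 1" unfolding tA by (simp add: algebra_simps power2_eq_square)
  have tot2: "t * measure M A + (1 + t) * (1 - measure M A) = 1" unfolding tA by (simp add: algebra_simps)
  have N1P: "N1 \<in> P" and N1m: "\<And>I. I \<in> sets borel \<Longrightarrow> measure N1 I = (2 - t) * measure M (I \<inter> A) + (1 - t) * measure M (I - A)"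
    using dens[OF M Ab _ _ tot1] t unfolding N1_def by auto
  have N2P: "N2 \<in> P" and N2m: "\<And>I. I \<in> sets borel \<Longrightarrow> measure N2 I = t * measure M (I \<inter> A) + (1 + t) * measure M (I - A)"
    using dens[OF M Ab _ _ tot2] t unfolding N2_def by auto
  have eq: "measure N1 I - measure M I = measure M I - measure N2 I" if I: "I \<in> sets borel" for I
    using N1m[OF I] N2m[OF I] split2[OF M I Ab] by (simp add: algebra_simps)
  note m = mid[OF N1P M N2P eq[OF nondeg_borel]]
  have D0: "kuiper_dist N1 N2 = 0" using Q N1P N2P m unfolding Q_def by blast
  have AI: "A \<in> nondeg_intervals" unfolding nondeg_intervals_def A_def mem_Collect_eq
  proof (intro conjI is_interval_ic)
    show "\<exists>a\<in>{..c}. \<exists>b\<in>{..c}. a < b" by (rule bexI[of _ "c - 1"], rule bexI[of _ c]) auto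
  qed
  have "measure N1 A - measure N2 A = 2 * (1 - t) * t"
    using N1m[OF Ab] N2m[OF Ab] tA by (simp add: algebra_simps)
  moreover have "2 * (1 - t) * t > 0" using t by simp
  ultimately have "0 < \<bar>measure N1 A - measure N2 A\<bar>" by simp
  also have "\<dots> \<le> kuiper_dist N1 N2" by (rule kd_upper[OF N1P N2P AI])
  finally show False using D0 by simp
qed



lemma nullP: assumes M: "M \<in> P" and A: "A \<in> sets borel"
  shows "A \<in> null_sets M \<longleftrightarrow> measure M A = 0"
proof -
  interpret prob_space M using P_prob[OF M] .
  have "A \<in> sets M" using A P_sets[OF M] by simp
  then show ?thesis by (auto simp: emeasure_eq_measure intro: null_setsI dest: null_setsD1)
qed

lemma Q_dirac: assumes M: "M \<in> P" and Q: "Q M"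
  shows "\<exists>x. M = return borel x"
proof -
  interpret prob_space M using P_prob[OF M] .
  have sM: "sets M = sets borel" using P_sets[OF M] .
  define F where "F c = measure M {..c}" for c
  have F01: "F c = 0 \<or> F c = 1" for c unfolding F_def using Q_01[OF M Q] .
  have Fmono: "F c \<le> F d" if "c \<le> d" for c d
    unfolding F_def using that by (intro finite_measure_mono) (auto simp: sM)
  have Fle1: "F c \<le> 1" for c unfolding F_def by simp
  have compl: "measure M {c<..} = 1 - F c" for c
  proof -
    have "UNIV - {..c} = {c<..}" by auto
    then show ?thesis using complP[OF M, of "{..c}"] unfolding F_def by simp
  qed
  have Mnn: "\<not> (UNIV \<in> null_sets M)"
  proof
    assume "UNIV \<in> null_sets M"
    then have "measure M UNIV = 0" using nullP[OF M] by simp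
    moreover have "measure M UNIV = 1" using prob_space spaceP[OF M] by simp
    ultimately show False by simp
  qed
  have ex1: "\<exists>n::nat. F (real n) = 1"
  proof (rule ccontr)
    assume "\<not> ?thesis"
    then have "F (real n) = 0" for n using F01 by blast
    then have "{..real n} \<in> null_sets M" for n using nullP[OF M, of "{..real n}"] unfolding F_def by simp
    then have "(\<Union>n. {..real n}) \<in> null_sets M" by blast
    moreover have "(\<Union>n. {..real n}) = UNIV"
    proof safe
      fix y :: real obtain n where "y \<le> real n" using real_arch_simple by blast
      then show "y \<in> (\<Union>n. {..real n})" by auto
    qed auto
    ultimately show False using Mnn by simp
  qed
  have ex0: "\<exists>n::nat. F (- real n) = 0"
  proof (rule ccontr)
    assume "\<not> ?thesis"
    then have "F (- real n) = 1" for n using F01 by blast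
    then have "{- real n<..} \<in> null_sets M" for n using nullP[OF M, of "{- real n<..}"] compl by simp
    then have "(\<Union>n. {- real n<..}) \<in> null_sets M" by blast
    moreover have "(\<Union>n. {- real n<..}) = UNIV"
    proof safe
      fix y :: real obtain n where "- y \<le> real n" using real_arch_simple by blast
      then have "- y < real (Suc n)" by simp
      then show "y \<in> (\<Union>n. {- real n<..})" by (intro UN_I[of "Suc n"]) auto
    qed auto
    ultimately show False using Mnn by simp
  qed
  define S where "S = {c. F c = 1}"
  obtain n1 where n1: "F (real n1) = 1" using ex1 by blast
  obtain n0 where n0: "F (- real n0) = 0" using ex0 by blast
  have Sne: "S \<noteq> {}" using n1 unfolding S_def by auto
  have Sbdd: "bdd_below S"
  proof (rule bdd_belowI[of _ "- real n0"])
    fix c assume "c \<in> S"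
    then have "F c = 1" unfolding S_def by simp
    show "- real n0 \<le> c"
    proof (rule ccontr)
      assume "\<not> ?thesis"
      then have "F c \<le> F (- real n0)" by (intro Fmono) simp
      then show False using \<open>F c = 1\<close> n0 by simp
    qed
  qed
  define x0 where "x0 = Inf S"
  have below: "F c = 0" if "c < x0" for c
  proof -
    have "c \<notin> S" using cInf_lower[OF _ Sbdd, of c] that unfolding x0_def by auto
    then show ?thesis using F01 unfolding S_def by auto
  qed
  have above: "measure M {c<..} = 0" if c: "x0 < c" for c
  proof -
    obtain s where "s \<in> S" "s < c" using cInf_less_iff[OF Sne Sbdd] c unfolding x0_def by auto
    then have "F c = 1" using Fmono[of s c] Fle1[of c] unfolding S_def by auto
    then show ?thesis using compl by simp
  qed
  have L: "{..<x0} \<in> null_sets M"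
  proof -
    have "{..x0 - 1 / Suc n} \<in> null_sets M" for n
      using nullP[OF M, of "{..x0 - 1 / Suc n}"] below[of "x0 - 1 / Suc n"] unfolding F_def by simp
    then have "(\<Union>n. {..x0 - 1 / Suc n}) \<in> null_sets M" by blast
    moreover have "(\<Union>n. {..x0 - 1 / Suc n}) = {..<x0}"
    proof safe
      fix y n assume "y \<le> x0 - 1 / real (Suc n)"
      moreover have "0 < 1 / real (Suc n)" by simp
      ultimately show "y < x0" by linarith
    next
      fix y assume "y < x0"
      then have "x0 - y > 0" by simp
      then obtain n where "1 / real (Suc n) < x0 - y" using nat_approx_posE by blast
      then show "y \<in> (\<Union>n. {..x0 - 1 / Suc n})" by (intro UN_I[of n]) auto
    qed
    ultimately show ?thesis by simp
  qed
  have R: "{x0<..} \<in> null_sets M"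
  proof -
    have "{x0 + 1 / Suc n<..} \<in> null_sets M" for n
      using nullP[OF M, of "{x0 + 1 / Suc n<..}"] above[of "x0 + 1 / Suc n"] by simp
    then have "(\<Union>n. {x0 + 1 / Suc n<..}) \<in> null_sets M" by blast
    moreover have "(\<Union>n. {x0 + 1 / Suc n<..}) = {x0<..}"
    proof safe
      fix y n assume "x0 + 1 / real (Suc n) < y"
      moreover have "0 < 1 / real (Suc n)" by simp
      ultimately show "x0 < y" by linarith
    next
      fix y assume "x0 < y"
      then have "y - x0 > 0" by simp
      then obtain n where "1 / real (Suc n) < y - x0" using nat_approx_posE by blast
      then show "y \<in> (\<Union>n. {x0 + 1 / Suc n<..})" by (intro UN_I[of n]) auto
    qed
    ultimately show ?thesis by simp
  qed
  have "{..<x0} \<union> {x0<..} \<in> null_sets M" using L R by blast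
  moreover have "{..<x0} \<union> {x0<..} = UNIV - {x0}" by auto
  ultimately have cz: "measure M (UNIV - {x0}) = 0" using nullP[OF M, of "UNIV - {x0}"] by simp
  then have one: "measure M {x0} = 1" using complP[OF M, of "{x0}"] by simp
  have "M = return borel x0"
  proof (rule measure_eqI)
    show "sets M = sets (return borel x0)" using sM by simp
    fix A assume A: "A \<in> sets M"
    have "measure M A = indicator A x0"
    proof (cases "x0 \<in> A")
      case True
      have "measure M {x0} \<le> measure M A" using True A by (intro finite_measure_mono) auto
      then show ?thesis using True one prob_le_1[of A] by simp
    next
      case False
      have "measure M A \<le> measure M (UNIV - {x0})" using False A
        by (intro finite_measure_mono) (auto simp: sM)
      then show ?thesis using False cz measure_nonneg[of M A] by simp
    qed
    then show "emeasure M A = emeasure (return borel x0) A"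
      using A sM by (simp add: emeasure_eq_measure indicator_def)
  qed
  then show ?thesis by blast
qed



lemma ret_meas: "measure (return borel (y::real)) {z} = (if z = y then 1 else 0)"
  by (simp add: measure_return indicator_def)

theorem lemma3p2:
  fixes \<phi> :: "real measure \<Rightarrow> real measure"
  assumes surj: "\<phi> ` prob_measures_real = prob_measures_real"
    and isom: "\<forall>\<mu>\<in>prob_measures_real. \<forall>\<nu>\<in>prob_measures_real.
                 kuiper_dist (\<phi> \<mu>) (\<phi> \<nu>) = kuiper_dist \<mu> \<nu>"
  shows "\<exists>f :: real \<Rightarrow> real. bij f \<and>
           (\<forall>\<mu>\<in>prob_measures_real. \<forall>x. measure (\<phi> \<mu>) {f x} = measure \<mu> {x})"
proof -
  have phiP: "\<phi> \<mu> \<in> P" if "\<mu> \<in> P" for \<mu> using surj that by blast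
  have pre: "\<exists>\<mu>\<in>P. \<nu> = \<phi> \<mu>" if "\<nu> \<in> P" for \<nu> using surj that by blast
  have QP: "Q (\<phi> \<mu>) \<longleftrightarrow> Q \<mu>" if mu: "\<mu> \<in> P" for \<mu>
  proof
    assume q: "Q (\<phi> \<mu>)"
    show "Q \<mu>" unfolding Q_def
    proof (intro ballI impI)
      fix N1 N2 assume N: "N1 \<in> P" "N2 \<in> P" and h: "2 * kuiper_dist N1 \<mu> = kuiper_dist N1 N2 \<and>
        2 * kuiper_dist \<mu> N2 = kuiper_dist N1 N2"
      have e: "kuiper_dist (\<phi> N1) (\<phi> \<mu>) = kuiper_dist N1 \<mu>" "kuiper_dist (\<phi> \<mu>) (\<phi> N2) = kuiper_dist \<mu> N2"
        "kuiper_dist (\<phi> N1) (\<phi> N2) = kuiper_dist N1 N2" using isom N mu by auto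
      have imp: "2 * kuiper_dist (\<phi> N1) (\<phi> \<mu>) = kuiper_dist (\<phi> N1) (\<phi> N2) \<and>
        2 * kuiper_dist (\<phi> \<mu>) (\<phi> N2) = kuiper_dist (\<phi> N1) (\<phi> N2) \<longrightarrow> kuiper_dist (\<phi> N1) (\<phi> N2) = 0"
        using q phiP[OF N(1)] phiP[OF N(2)] unfolding Q_def by blast
      show "kuiper_dist N1 N2 = 0" using imp h unfolding e by simp
    qed
  next
    assume q: "Q \<mu>"
    show "Q (\<phi> \<mu>)" unfolding Q_def
    proof (intro ballI impI)
      fix N1 N2 assume N: "N1 \<in> P" "N2 \<in> P" and h: "2 * kuiper_dist N1 (\<phi> \<mu>) = kuiper_dist N1 N2 \<and>
        2 * kuiper_dist (\<phi> \<mu>) N2 = kuiper_dist N1 N2"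
      obtain M1 where M1: "M1 \<in> P" "N1 = \<phi> M1" using pre[OF N(1)] by blast
      obtain M2 where M2: "M2 \<in> P" "N2 = \<phi> M2" using pre[OF N(2)] by blast
      have e: "kuiper_dist (\<phi> M1) (\<phi> \<mu>) = kuiper_dist M1 \<mu>" "kuiper_dist (\<phi> \<mu>) (\<phi> M2) = kuiper_dist \<mu> M2"
        "kuiper_dist (\<phi> M1) (\<phi> M2) = kuiper_dist M1 M2" using isom M1 M2 mu by auto
      have imp: "2 * kuiper_dist M1 \<mu> = kuiper_dist M1 M2 \<and>
        2 * kuiper_dist \<mu> M2 = kuiper_dist M1 M2 \<longrightarrow> kuiper_dist M1 M2 = 0"
        using q M1(1) M2(1) unfolding Q_def by blast
      have "kuiper_dist M1 M2 = 0" using imp h unfolding M1(2) M2(2) e by simp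
      then show "kuiper_dist N1 N2 = 0" using isom M1 M2 by auto
    qed
  qed
  have img: "\<exists>y. \<phi> (return borel x) = return borel y" for x
    using Q_dirac[OF phiP[OF ret_P]] QP[OF ret_P] Q_ret by blast
  define f where "f x = (SOME y. \<phi> (return borel x) = return borel y)" for x
  have hf: "\<phi> (return borel x) = return borel (f x)" for x
    unfolding f_def using someI_ex[OF img[of x]] .
  have ret_inj: "y = z" if "return borel y = return borel (z::real)" for y z
    using ret_meas[of y y] ret_meas[of z y] that by (simp split: if_splits)
  have form: "measure (\<phi> \<mu>) {f x} = measure \<mu> {x}" if mu: "\<mu> \<in> P" for \<mu> x
  proof -
    have "measure (\<phi> \<mu>) {f x} = 1 - kuiper_dist (\<phi> \<mu>) (return borel (f x))"
      using kd_ret[OF phiP[OF mu]] by simp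
    also have "\<dots> = 1 - kuiper_dist (\<phi> \<mu>) (\<phi> (return borel x))" by (simp add: hf)
    also have "\<dots> = 1 - kuiper_dist \<mu> (return borel x)" using isom mu ret_P by auto
    also have "\<dots> = measure \<mu> {x}" using kd_ret[OF mu] by simp
    finally show ?thesis .
  qed
  have "inj f"
  proof (rule injI)
    fix x x' assume e: "f x = f x'"
    have "kuiper_dist (return borel x') (return borel x) = kuiper_dist (\<phi> (return borel x')) (\<phi> (return borel x))"
      using isom ret_P by auto
    also have "\<dots> = 0" unfolding hf e using kd_ret[OF ret_P, of "f x'" "f x'"] ret_meas by simp
    finally have "measure (return borel x') {x} = 1" using kd_ret[OF ret_P, of x' x] by simp
    then show "x = x'" using ret_meas[of x' x] by (simp split: if_splits)
  qed
  moreover have "surj f"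
  proof (rule surjI)
    fix y
    obtain \<mu> where mu: "\<mu> \<in> P" "return borel y = \<phi> \<mu>" using pre[OF ret_P] by blast
    have "Q \<mu>" using QP[OF mu(1)] Q_ret[of y] mu(2) by simp
    then obtain x where x: "\<mu> = return borel x" using Q_dirac[OF mu(1)] by blast
    have "return borel y = return borel (f x)" using mu(2) x hf by simp
    then have "f x = y" using ret_inj by metis
    then show "f (SOME x. f x = y) = y" by (rule someI)
  qed
  ultimately show ?thesis using form by (intro exI[of _ f]) (auto simp: bij_def)
qed

end
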